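(* For every integer $N\ge 0$, let $T(N)$ be the number of tilings of a $2\times 3\times n$ box, $n=2N/3$, by $N$ bricks of size $1\times 2\times 2$ (and $0$ if $3\nmid N$). Then, as formal power series, \[ \sum_{N\ge 0} T(N)\,z^N=\frac{1-2z^3}{(1-z^3)(1-6z^3)}. \]
   Context: A tiling of a $k\times m\times n$ box (made of $kmn$ unit cubes) by $a\times b\times c$ bricks is a partition of the box into non-overlapping axis-parallel boxes with integer corner coordinates, each congruent (by an axis-permuting placement) to the $a\times b\times c$ brick; all orientations are allowed. Tilings related by symmetries of the box are counted as distinct. The empty tiling counts once for $N=0$. *)

theory Defs
  imports Main "HOL-Computational_Algebra.Formal_Power_Series"
begin

type_synonym cell = "nat \<times> nat \<times> nat"

text \<open>The axis-parallel box of unit cubes with lower corner p and side lengths d.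
  A unit cube is identified with its lower corner (i,j,l).\<close>
definition cbox3 :: "nat \<times> nat \<times> nat \<Rightarrow> nat \<times> nat \<times> nat \<Rightarrow> cell set" where
  "cbox3 p d = (case p of (x,y,z) \<Rightarrow> case d of (a,b,c) \<Rightarrow>
       {x..<x+a} \<times> {y..<y+b} \<times> {z..<z+c})"

definition orientations :: "nat \<times> nat \<times> nat \<Rightarrow> (nat \<times> nat \<times> nat) set" where
  "orientations d = (case d of (a,b,c) \<Rightarrow>
     {(a,b,c),(a,c,b),(b,a,c),(b,c,a),(c,a,b),(c,b,a)})"

definition is_brick :: "nat \<times> nat \<times> nat \<Rightarrow> cell set \<Rightarrow> bool" where
  "is_brick d B \<longleftrightarrow> (\<exists>p e. e \<in> orientations d \<and> B = cbox3 p e)"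

definition is_tiling :: "nat \<Rightarrow> nat \<Rightarrow> nat \<Rightarrow> nat \<times> nat \<times> nat \<Rightarrow> cell set set \<Rightarrow> bool" where
  "is_tiling k m n d P \<longleftrightarrow> finite P \<and> (\<forall>B\<in>P. is_brick d B) \<and>
     pairwise disjnt P \<and> \<Union>P = cbox3 (0,0,0) (k,m,n)"

definition T :: "nat \<Rightarrow> nat" where
  "T N = (if 3 dvd N
          then card {P. is_tiling 2 3 (2 * N div 3) (1,2,2) P \<and> card P = N}
          else 0)"

end

theory Submission imports Defs begin

definition tilings :: "cell set \<Rightarrow> cell set set set" where
  "tilings R = {P. finite P \<and> (\<forall>X\<in>P. is_brick (1,2,2) X) \<and> pairwise disjnt P \<and> \<Union>P = R}"

definition tc :: "cell set \<Rightarrow> nat" where "tc R = card (tilings R)"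

lemma orient: "orientations (1,2,2) = {(1,2,2),(2,1,2),(2,2,1)}"
  by (auto simp: orientations_def)

lemma card_cbox3: "card (cbox3 p e) = fst e * fst (snd e) * snd (snd e)"
  by (cases p; cases e) (simp add: cbox3_def card_cartesian_product)

lemma brick_card: "is_brick (1,2,2) X \<Longrightarrow> card X = 4"
  unfolding is_brick_def orient by (auto simp: card_cbox3)

lemma brick_finite: "is_brick (1,2,2) X \<Longrightarrow> finite X"
  using brick_card[of X] card.infinite by fastforce

lemma brick_ne: "is_brick (1,2,2) X \<Longrightarrow> X \<noteq> {}"
  using brick_card by fastforce

lemma tilings_finite: "finite R \<Longrightarrow> finite (tilings R)"
proof -
  assume "finite R"
  have "tilings R \<subseteq> Pow (Pow R)" unfolding tilings_def by auto
  thus ?thesis using \<open>finite R\<close> finite_subset by blast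
qed

lemma tiling_volume: assumes "P \<in> tilings R" shows "card R = 4 * card P"
proof -
  from assms have f: "finite P" and b: "\<forall>X\<in>P. is_brick (1,2,2) X" and d: "pairwise disjnt P"
    and u: "\<Union>P = R" by (auto simp: tilings_def)
  have "card (\<Union>P) = (\<Sum>X\<in>P. card X)"
    using card_Union_disjoint[OF d] f b brick_finite by blast
  also have "\<dots> = (\<Sum>X\<in>P. 4)" using b brick_card by simp
  finally show ?thesis using u by simp
qed

lemma tc_vol0: "\<not> 4 dvd card R \<Longrightarrow> tc R = 0"
  unfolding tc_def using tiling_volume by (metis card.empty card_eq_0_iff dvd_triv_left ex_in_conv tilings_def)

lemma tc_empty: "tc {} = 1"
proof -
  have "tilings {} = {{}}" unfolding tilings_def using brick_ne by (auto simp: pairwise_def)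
  thus ?thesis by (simp add: tc_def)
qed

lemma tc_brick: assumes "is_brick (1,2,2) X" shows "tc X = 1"
proof -
  have "tilings X = {{X}}"
  proof
    show "{{X}} \<subseteq> tilings X" using assms by (auto simp: tilings_def)
  next
    show "tilings X \<subseteq> {{X}}"
    proof
      fix P assume P: "P \<in> tilings X"
      hence f: "finite P" and b: "\<forall>Y\<in>P. is_brick (1,2,2) Y" and d: "pairwise disjnt P"
        and u: "\<Union>P = X" by (auto simp: tilings_def)
      have "X \<noteq> {}" using brick_ne assms by blast
      then obtain Y where Y: "Y \<in> P" using u by auto
      have "Y \<subseteq> X" using Y u by auto
      moreover have "card Y = card X" using b Y brick_card assms by auto
      ultimately have YX: "Y = X" using brick_finite assms card_subset_eq by blast
      have "P = {X}"
      proof (rule ccontr)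
        assume "P \<noteq> {X}"
        then obtain Z where Z: "Z \<in> P" "Z \<noteq> X" using Y YX by blast
        have "disjnt Z X" using d Z Y YX by (metis pairwise_def)
        moreover have "Z \<subseteq> X" using Z u by auto
        ultimately have "Z = {}" by (auto simp: disjnt_def)
        thus False using b Z brick_ne by blast
      qed
      thus "P \<in> {{X}}" by simp
    qed
  qed
  thus ?thesis by (simp add: tc_def)
qed

lemma tilings_decomp:
  assumes c: "c \<in> R"
  shows "tilings R = (\<Union>X\<in>{X. is_brick (1,2,2) X \<and> c \<in> X \<and> X \<subseteq> R}. insert X ` tilings (R - X))"
    (is "_ = ?rhs")
proof
  show "tilings R \<subseteq> ?rhs"
  proof
    fix P assume P: "P \<in> tilings R"
    hence f: "finite P" and b: "\<forall>Y\<in>P. is_brick (1,2,2) Y" and d: "pairwise disjnt P"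
      and u: "\<Union>P = R" by (auto simp: tilings_def)
    obtain X where X: "X \<in> P" "c \<in> X" using c u by auto
    have XR: "X \<subseteq> R" using X u by auto
    have "\<Union>(P - {X}) = R - X"
    proof
      show "\<Union>(P - {X}) \<subseteq> R - X"
      proof
        fix x assume "x \<in> \<Union>(P - {X})"
        then obtain Y where Y: "Y \<in> P" "Y \<noteq> X" "x \<in> Y" by blast
        have "disjnt Y X" using d Y X by (meson pairwiseD)
        thus "x \<in> R - X" using Y u by (auto simp: disjnt_def)
      qed
      show "R - X \<subseteq> \<Union>(P - {X})" using u by auto
    qed
    moreover have "pairwise disjnt (P - {X})" using d by (meson Diff_subset pairwise_subset)
    ultimately have "P - {X} \<in> tilings (R - X)" using f b by (simp add: tilings_def)
    moreover have "P = insert X (P - {X})" using X by auto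
    ultimately show "P \<in> ?rhs" using X XR b by blast
  qed
next
  show "?rhs \<subseteq> tilings R"
  proof
    fix P assume "P \<in> ?rhs"
    then obtain X Q where X: "is_brick (1,2,2) X" "c \<in> X" "X \<subseteq> R" and Q: "Q \<in> tilings (R - X)"
      and P: "P = insert X Q" by blast
    from Q have f: "finite Q" and b: "\<forall>Y\<in>Q. is_brick (1,2,2) Y" and d: "pairwise disjnt Q"
      and u: "\<Union>Q = R - X" by (auto simp: tilings_def)
    have "\<forall>Y\<in>Q. disjnt X Y" using u by (auto simp: disjnt_def)
    hence "pairwise disjnt (insert X Q)" using d unfolding pairwise_insert
      by (metis disjnt_sym)
    moreover have "\<Union>(insert X Q) = R" using u X by auto
    ultimately show "P \<in> tilings R" using f b X P unfolding tilings_def by simp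
  qed
qed

lemma tc_decomp:
  assumes c: "c \<in> R" and fin: "finite R"
  shows "tc R = (\<Sum>X\<in>{X. is_brick (1,2,2) X \<and> c \<in> X \<and> X \<subseteq> R}. tc (R - X))"
proof -
  let ?S = "{X. is_brick (1,2,2) X \<and> c \<in> X \<and> X \<subseteq> R}"
  have "?S \<subseteq> Pow R" by blast
  hence fS: "finite ?S" using fin finite_subset by blast
  have "tc R = card (\<Union>X\<in>?S. insert X ` tilings (R - X))" unfolding tc_def using tilings_decomp[OF c] by simp
  also have "\<dots> = (\<Sum>X\<in>?S. card (insert X ` tilings (R - X)))"
  proof (rule card_UN_disjoint[OF fS])
    show "\<forall>X\<in>?S. finite (insert X ` tilings (R - X))" using fin tilings_finite by simp
    show "\<forall>X\<in>?S. \<forall>Y\<in>?S. X \<noteq> Y \<longrightarrow> insert X ` tilings (R - X) \<inter> insert Y ` tilings (R - Y) = {}"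
    proof (intro ballI impI)
      fix X Y assume X: "X \<in> ?S" and Y: "Y \<in> ?S" and ne: "X \<noteq> Y"
      show "insert X ` tilings (R - X) \<inter> insert Y ` tilings (R - Y) = {}"
      proof (rule ccontr)
        assume "\<not> ?thesis"
        then obtain P Q where P: "P \<in> tilings (R - X)" and Q: "Q \<in> tilings (R - Y)" and e: "insert X P = insert Y Q"
          by blast
        have "X \<in> Q" using e ne by blast
        hence "X \<subseteq> R - Y" using Q by (auto simp: tilings_def)
        thus False using X Y by auto
      qed
    qed
  qed
  also have "\<dots> = (\<Sum>X\<in>?S. tc (R - X))"
  proof (rule sum.cong[OF refl])
    fix X assume X: "X \<in> ?S"
    have "inj_on (insert X) (tilings (R - X))"
    proof (rule inj_onI)
      fix P Q assume P: "P \<in> tilings (R - X)" and Q: "Q \<in> tilings (R - X)" and e: "insert X P = insert X Q"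
      have ne: "X \<noteq> {}" using X brick_ne by blast
      have "\<Union>P = R - X" "\<Union>Q = R - X" using P Q by (simp_all add: tilings_def)
      hence "X \<notin> P" "X \<notin> Q" using ne by blast+
      thus "P = Q" using e by (metis insert_ident)
    qed
    thus "card (insert X ` tilings (R - X)) = tc (R - X)" by (simp add: card_image tc_def)
  qed
  finally show ?thesis .
qed


definition H :: "nat \<Rightarrow> (nat\<times>nat) set \<Rightarrow> (nat\<times>nat) set \<Rightarrow> cell set" where
  "H m A B = {(x,y,z). (z<m \<and> x<2 \<and> y<3) \<or> (z=m \<and> (x,y)\<in>A) \<or> (z=Suc m \<and> (x,y)\<in>B)}"

definition Gr :: "(nat\<times>nat) set" where "Gr = {(0,0),(0,1),(0,2),(1,0),(1,1),(1,2)}"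

lemma mem_Gr: "(x,y) \<in> Gr \<longleftrightarrow> x < 2 \<and> y < 3"
  unfolding Gr_def by auto

definition rect :: "nat \<Rightarrow> nat \<Rightarrow> nat \<Rightarrow> (nat\<times>nat) set" where
  "rect k px py = (if k=0 then {(px,py),(Suc px,py),(px,Suc py),(Suc px,Suc py)}
     else if k=1 then {(px,py),(px,Suc py)} else {(px,py),(Suc px,py)})"

definition brk :: "nat \<Rightarrow> nat \<Rightarrow> nat \<Rightarrow> nat \<Rightarrow> cell set" where
  "brk m k px py = {(x,y,z). (x,y) \<in> rect k px py \<and> (z = Suc m \<or> (k\<noteq>0 \<and> z=m))}"

lemma H_finite: assumes "A \<subseteq> Gr" "B \<subseteq> Gr" shows "finite (H m A B)"
proof -
  have "H m A B \<subseteq> {..<2} \<times> {..<3} \<times> {..Suc m}"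
    using assms by (auto simp: H_def mem_Gr[symmetric] Gr_def)
  thus ?thesis using finite_subset by blast
qed

lemma H_diff: "H m A B - brk m k px py = H m (if k=0 then A else A - rect k px py) (B - rect k px py)"
  unfolding H_def brk_def by auto

lemma mem_cbox3: "(x,y,z) \<in> cbox3 (px,py,pz) (a,b,d) \<longleftrightarrow>
   px \<le> x \<and> x < px+a \<and> py \<le> y \<and> y < py+b \<and> pz \<le> z \<and> z < pz+d"
  by (auto simp: cbox3_def)

lemma brk_brick: "k < 3 \<Longrightarrow> is_brick (1,2,2) (brk m k px py)"
proof -
  assume k: "k < 3"
  have "k = 0 \<or> k = 1 \<or> k = 2" using k by auto
  moreover have "brk m 0 px py = cbox3 (px,py,Suc m) (2,2,1)"
    by (auto simp: brk_def rect_def cbox3_def)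
  moreover have "brk m 1 px py = cbox3 (px,py,m) (1,2,2)"
    by (auto simp: brk_def rect_def cbox3_def)
  moreover have "brk m 2 px py = cbox3 (px,py,m) (2,1,2)"
    by (auto simp: brk_def rect_def cbox3_def)
  ultimately show ?thesis unfolding is_brick_def orient by blast
qed


lemma top_char:
  assumes AG: "A \<subseteq> Gr" and BG: "B \<subseteq> Gr"
  shows "{X. is_brick (1,2,2) X \<and> (cx,cy,Suc m) \<in> X \<and> X \<subseteq> H m A B} =
    (\<lambda>(k,px,py). brk m k px py) ` {(k,px,py). k<3 \<and> px<2 \<and> py<3 \<and> (cx,cy) \<in> rect k px py \<and>
       rect k px py \<subseteq> B \<and> (k\<noteq>0 \<longrightarrow> rect k px py \<subseteq> A)}"
  (is "?L = ?R")
proof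
  show "?L \<subseteq> ?R"
  proof
    fix X assume "X \<in> ?L"
    hence br: "is_brick (1,2,2) X" and cX: "(cx,cy,Suc m) \<in> X" and XH: "X \<subseteq> H m A B" by simp_all
    obtain p e where e: "e \<in> {(1,2,2),(2,1,2),(2,2,1)}" and Xp: "X = cbox3 p e"
      using br unfolding is_brick_def orient by blast
    obtain px py pz where "p = (px,py,pz)" by (cases p) blast
    with Xp have X: "X = cbox3 (px,py,pz) e" by simp
    have inB: "(x,y) \<in> B" if "(x,y,Suc m) \<in> X" for x y
      using XH that by (auto simp: H_def)
    have inA: "(x,y) \<in> A" if "(x,y,m) \<in> X" for x y
      using XH that by (auto simp: H_def)
    have noSS: "(x,y,Suc (Suc m)) \<notin> X" for x y
      using XH by (auto simp: H_def)
    show "X \<in> ?R"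
    proof -
      obtain k where k: "k < 3" and Xk: "X = brk m k px py"
      proof -
        consider "e = (2,2,1)" | "e = (1,2,2)" | "e = (2,1,2)" using e by blast
        then show ?thesis
        proof cases
          case 1
          hence "pz = Suc m" using cX X by (auto simp: mem_cbox3)
          hence "X = brk m 0 px py" using X 1 by (auto simp: brk_def rect_def cbox3_def)
          thus ?thesis using that[of 0] by simp
        next
          case 2
          have "pz = m"
          proof -
            have "pz \<le> Suc m" "Suc m < pz + 2" using cX X 2 by (auto simp: mem_cbox3)
            moreover have "pz \<noteq> Suc m"
            proof
              assume "pz = Suc m"
              hence "(px,py,Suc (Suc m)) \<in> X" using X 2 by (auto simp: mem_cbox3)
              thus False using noSS by blast
            qed
            ultimately show ?thesis by linarith
          qed
          hence "X = brk m 1 px py" using X 2 by (auto simp: brk_def rect_def cbox3_def)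
          thus ?thesis using that[of 1] by simp
        next
          case 3
          have "pz = m"
          proof -
            have "pz \<le> Suc m" "Suc m < pz + 2" using cX X 3 by (auto simp: mem_cbox3)
            moreover have "pz \<noteq> Suc m"
            proof
              assume "pz = Suc m"
              hence "(px,py,Suc (Suc m)) \<in> X" using X 3 by (auto simp: mem_cbox3)
              thus False using noSS by blast
            qed
            ultimately show ?thesis by linarith
          qed
          hence "X = brk m 2 px py" using X 3 by (auto simp: brk_def rect_def cbox3_def)
          thus ?thesis using that[of 2] by simp
        qed
      qed
      have rB: "rect k px py \<subseteq> B"
      proof
        fix p assume p: "p \<in> rect k px py"
        obtain x y where "p = (x,y)" by fastforce
        thus "p \<in> B" using inB[of x y] Xk p by (simp add: brk_def)
      qed
      have rA: "k \<noteq> 0 \<longrightarrow> rect k px py \<subseteq> A"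
      proof (intro impI subsetI)
        fix p assume p: "k \<noteq> 0" "p \<in> rect k px py"
        obtain x y where "p = (x,y)" by fastforce
        thus "p \<in> A" using inA[of x y] Xk p by (simp add: brk_def)
      qed
      have "(px,py) \<in> rect k px py" by (simp add: rect_def)
      hence "(px,py) \<in> Gr" using rB BG by blast
      hence b: "px < 2" "py < 3" by (auto simp: mem_Gr)
      have "(cx,cy) \<in> rect k px py" using cX Xk by (auto simp: brk_def)
      thus ?thesis unfolding Xk using k rB rA b by (intro image_eqI[where x="(k,px,py)"]) auto
    qed
  qed
next
  show "?R \<subseteq> ?L"
  proof
    fix X assume "X \<in> ?R"
    then obtain k px py where k: "k < 3" and c: "(cx,cy) \<in> rect k px py" and rB: "rect k px py \<subseteq> B"
      and rA: "k\<noteq>0 \<longrightarrow> rect k px py \<subseteq> A" and X: "X = brk m k px py" by blast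
    have "X \<subseteq> H m A B" using rA rB unfolding X brk_def H_def by auto
    moreover have "(cx,cy,Suc m) \<in> X" using c X by (simp add: brk_def)
    ultimately show "X \<in> ?L" using brk_brick[OF k] X by blast
  qed
qed


lemma rect_ge: "(x,y) \<in> rect k px py \<Longrightarrow> px \<le> x \<and> py \<le> y"
  by (auto simp: rect_def split: if_splits)

lemma rect_inj:
  assumes k: "k < 3" "k' < 3" and e: "rect k px py = rect k' px' py'"
  shows "k = k' \<and> px = px' \<and> py = py'"
proof -
  have "(px,py) \<in> rect k px py" "(px',py') \<in> rect k' px' py'" by (simp_all add: rect_def)
  hence "px' \<le> px \<and> py' \<le> py" "px \<le> px' \<and> py \<le> py'" using e rect_ge by metis+
  hence p: "px = px'" "py = py'" by auto
  have "k = 0 \<or> k = 1 \<or> k = 2" "k' = 0 \<or> k' = 1 \<or> k' = 2" using k by auto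
  hence "k = k'" using e unfolding p rect_def by (auto simp: doubleton_eq_iff insert_eq_iff)
  thus ?thesis using p by simp
qed

lemma rect_of_brk: "rect k px py = {(x,y). (x,y,Suc m) \<in> brk m k px py}"
  by (auto simp: brk_def)

lemma top_sum:
  assumes AG: "A \<subseteq> Gr" and BG: "B \<subseteq> Gr" and c: "(cx,cy) \<in> B"
  shows "tc (H m A B) = (\<Sum>k<3. \<Sum>px<2. \<Sum>py<3.
     if (cx,cy) \<in> rect k px py \<and> rect k px py \<subseteq> B \<and> (k\<noteq>0 \<longrightarrow> rect k px py \<subseteq> A)
     then tc (H m (if k=0 then A else A - rect k px py) (B - rect k px py)) else 0)"
proof -
  let ?P = "\<lambda>(k,px,py). (cx,cy) \<in> rect k px py \<and> rect k px py \<subseteq> B \<and> (k\<noteq>0 \<longrightarrow> rect k px py \<subseteq> A)"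
  let ?U = "{..<3::nat} \<times> {..<2::nat} \<times> {..<3::nat}"
  let ?V = "{(k,px,py). k<3 \<and> px<2 \<and> py<3 \<and> (cx,cy) \<in> rect k px py \<and>
       rect k px py \<subseteq> B \<and> (k\<noteq>0 \<longrightarrow> rect k px py \<subseteq> A)}"
  let ?f = "\<lambda>(k,px,py). brk m k px py"
  let ?g = "\<lambda>(k,px,py). tc (H m (if k=0 then A else A - rect k px py) (B - rect k px py))"
  have cH: "(cx,cy,Suc m) \<in> H m A B" using c by (simp add: H_def)
  have "tc (H m A B) = (\<Sum>X\<in>?f ` ?V. tc (H m A B - X))"
    using tc_decomp[OF cH H_finite[OF AG BG]] top_char[OF AG BG] by simp
  also have "\<dots> = (\<Sum>v\<in>?V. tc (H m A B - ?f v))"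
  proof (rule sum.reindex[unfolded comp_def])
    show "inj_on ?f ?V"
    proof (rule inj_onI)
      fix v w assume v: "v \<in> ?V" and w: "w \<in> ?V" and e: "?f v = ?f w"
      obtain k px py where vv: "v = (k,px,py)" by (cases v) blast
      obtain k' px' py' where ww: "w = (k',px',py')" by (cases w) blast
      have "rect k px py = rect k' px' py'" using e vv ww rect_of_brk[of k px py m] rect_of_brk[of k' px' py' m] by simp
      moreover have "k < 3" "k' < 3" using v w vv ww by auto
      ultimately show "v = w" using rect_inj vv ww by blast
    qed
  qed
  also have "\<dots> = (\<Sum>v\<in>?V. ?g v)"
    by (rule sum.cong[OF refl]) (auto simp: H_diff)
  also have "?V = {v\<in>?U. ?P v}" by auto
  also have "(\<Sum>v\<in>{v\<in>?U. ?P v}. ?g v) = (\<Sum>v\<in>?U. if ?P v then ?g v else 0)"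
    by (rule sum.inter_filter) simp
  also have "\<dots> = (\<Sum>k<3. \<Sum>px<2. \<Sum>py<3.
     if (cx,cy) \<in> rect k px py \<and> rect k px py \<subseteq> B \<and> (k\<noteq>0 \<longrightarrow> rect k px py \<subseteq> A)
     then tc (H m (if k=0 then A else A - rect k px py) (B - rect k px py)) else 0)"
    unfolding sum.cartesian_product by (rule sum.cong) (auto split: if_splits)
  finally show ?thesis .
qed

lemma st1: "tc (H m Gr Gr) = tc (H m Gr {(0,0),(1,0)}) + tc (H m {(0,0),(0,1),(0,2),(1,0)} {(0,0),(0,1),(0,2),(1,0)}) + tc (H m {(0,0),(0,1),(1,0),(1,1)} {(0,0),(0,1),(1,0),(1,1)})"
  by (subst top_sum[where cx=1 and cy=2])
     (simp_all add: Gr_def rect_def eval_nat_numeral sum.lessThan_Suc insert_Diff_if)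

lemma st2: "tc (H m {(0,0),(0,1),(1,0),(1,1)} {(0,0),(0,1),(1,0),(1,1)}) = tc (H m {(0,0),(0,1),(1,0),(1,1)} {}) + tc (H m {(0,0),(0,1)} {(0,0),(0,1)}) + tc (H m {(0,0),(1,0)} {(0,0),(1,0)})"
  by (subst top_sum[where cx=1 and cy=1])
     (simp_all add: Gr_def rect_def eval_nat_numeral sum.lessThan_Suc insert_Diff_if)

lemma st3: "tc (H m {(0,0),(1,0)} {(0,0),(1,0)}) = tc (H m {} {})"
  by (subst top_sum[where cx=1 and cy=0])
     (simp_all add: Gr_def rect_def eval_nat_numeral sum.lessThan_Suc insert_Diff_if)

lemma st4: "tc (H m {(0,0),(0,1)} {(0,0),(0,1)}) = tc (H m {} {})"
  by (subst top_sum[where cx=0 and cy=1])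
     (simp_all add: Gr_def rect_def eval_nat_numeral sum.lessThan_Suc insert_Diff_if)

lemma st5: "tc (H m Gr {(0,0),(0,1),(1,0),(1,1)}) = tc (H m Gr {}) + tc (H m {(0,0),(0,1),(0,2),(1,2)} {(0,0),(0,1)}) + tc (H m {(0,0),(0,2),(1,0),(1,2)} {(0,0),(1,0)})"
  by (subst top_sum[where cx=1 and cy=1])
     (simp_all add: Gr_def rect_def eval_nat_numeral sum.lessThan_Suc insert_Diff_if)

lemma st6: "tc (H m {(0,0),(0,2),(1,0),(1,2)} {(0,0),(1,0)}) = tc (H m {(0,2),(1,2)} {})"
  by (subst top_sum[where cx=1 and cy=0])
     (simp_all add: Gr_def rect_def eval_nat_numeral sum.lessThan_Suc insert_Diff_if)

lemma st7: "tc (H m Gr {(0,2),(1,2)}) = tc (H m {(0,0),(0,1),(1,0),(1,1)} {})"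
  by (subst top_sum[where cx=1 and cy=2])
     (simp_all add: Gr_def rect_def eval_nat_numeral sum.lessThan_Suc insert_Diff_if)

lemma st8: "tc (H m {(0,0),(0,1),(0,2),(1,2)} {(0,0),(0,1)}) = tc (H m {(0,2),(1,2)} {})"
  by (subst top_sum[where cx=0 and cy=1])
     (simp_all add: Gr_def rect_def eval_nat_numeral sum.lessThan_Suc insert_Diff_if)

lemma st9: "tc (H m {(0,0),(0,1),(0,2),(1,0)} {(0,0),(0,1),(0,2),(1,0)}) = tc (H m {(0,0),(1,0)} {(0,0),(1,0)})"
  by (subst top_sum[where cx=0 and cy=2])
     (simp_all add: Gr_def rect_def eval_nat_numeral sum.lessThan_Suc insert_Diff_if)

lemma st10: "tc (H m Gr {(0,0),(1,0)}) = tc (H m {(0,1),(0,2),(1,1),(1,2)} {})"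
  by (subst top_sum[where cx=1 and cy=0])
     (simp_all add: Gr_def rect_def eval_nat_numeral sum.lessThan_Suc insert_Diff_if)

lemma st11: "tc (H m Gr {(0,1),(0,2),(1,1),(1,2)}) = tc (H m Gr {}) + tc (H m {(0,0),(0,1),(0,2),(1,0)} {(0,1),(0,2)}) + tc (H m {(0,0),(0,1),(1,0),(1,1)} {(0,1),(1,1)})"
  by (subst top_sum[where cx=1 and cy=2])
     (simp_all add: Gr_def rect_def eval_nat_numeral sum.lessThan_Suc insert_Diff_if)

lemma st12: "tc (H m {(0,0),(0,1),(1,0),(1,1)} {(0,1),(1,1)}) = tc (H m {(0,0),(1,0)} {})"
  by (subst top_sum[where cx=1 and cy=1])
     (simp_all add: Gr_def rect_def eval_nat_numeral sum.lessThan_Suc insert_Diff_if)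

lemma st13: "tc (H m {(0,0),(0,1),(0,2),(1,0)} {(0,1),(0,2)}) = tc (H m {(0,0),(1,0)} {})"
  by (subst top_sum[where cx=0 and cy=2])
     (simp_all add: Gr_def rect_def eval_nat_numeral sum.lessThan_Suc insert_Diff_if)


lemma H_down: "H (Suc m) A {} = H m Gr A"
  unfolding H_def by (auto simp: mem_Gr less_Suc_eq)

definition "Qs = {(0::nat,0::nat),(0,1),(1,0),(1,1)}"
definition "Qp = {(0::nat,1::nat),(0,2),(1,1),(1,2)}"
definition "r0 = {(0::nat,0::nat),(1,0)}"
definition "r2 = {(0::nat,2::nat),(1,2)}"
definition "tt n = tc (H n {} {})"
definition "gg A n = tc (H n A {})"

lemma tt_Suc: "tt (Suc m) = tc (H m Gr {})" by (simp add: tt_def H_down)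
lemma gg_Suc: "gg A (Suc m) = tc (H m Gr A)" by (simp add: gg_def H_down)

lemma R1: "tt (Suc (Suc m)) = gg r0 (Suc m) + 3 * tt m + gg Qs m"
proof -
  have "tt (Suc (Suc m)) = tc (H m Gr Gr)" by (simp add: tt_Suc H_down)
  thus ?thesis using st1[of m] st2[of m] st3[of m] st4[of m] st9[of m]
    by (simp add: gg_def tt_def r0_def Qs_def H_down)
qed

lemma R2: "gg r0 (Suc m) = gg Qp m"
  using st10[of m] by (simp add: gg_def r0_def Qp_def H_down)

lemma R3: "gg Qs (Suc m) = tt (Suc m) + 2 * gg r2 m"
  using st5[of m] st6[of m] st8[of m] by (simp add: tt_def gg_def Qs_def r2_def H_down)

lemma R4: "gg r2 (Suc m) = gg Qs m"
  using st7[of m] by (simp add: gg_def Qs_def r2_def H_down)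

lemma R5: "gg Qp (Suc m) = tt (Suc m) + 2 * gg r0 m"
  using st11[of m] st12[of m] st13[of m] by (simp add: tt_def gg_def Qp_def r0_def H_down)


lemma H_box: "H n {} {} = {..<2} \<times> {..<3} \<times> {..<n}"
  unfolding H_def by auto

lemma tt0: "tt 0 = 1"
proof -
  have "H 0 {} {} = {}" by (simp add: H_box)
  thus ?thesis by (simp add: tt_def tc_empty)
qed

lemma tt_odd: "tt (Suc (2*k)) = 0"
proof -
  have "card (H (Suc (2*k)) {} {}) = 6 * Suc (2*k)" by (simp add: H_box card_cartesian_product)
  moreover have "\<not> 4 dvd 6 * Suc (2*k)" by presburger
  ultimately show ?thesis unfolding tt_def using tc_vol0 by metis
qed

lemma ggQs0: "gg Qs 0 = 1"
proof -
  have "H 0 Qs {} = cbox3 (0,0,0) (2,2,1)" by (auto simp: H_def Qs_def cbox3_def)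
  moreover have "is_brick (1,2,2) (cbox3 (0,0,0) (2,2,1))" unfolding is_brick_def orient by blast
  ultimately show ?thesis by (simp add: gg_def tc_brick)
qed

lemma ggQp0: "gg Qp 0 = 1"
proof -
  have "H 0 Qp {} = cbox3 (0,1,0) (2,2,1)" by (auto simp: H_def Qp_def cbox3_def)
  moreover have "is_brick (1,2,2) (cbox3 (0,1,0) (2,2,1))" unfolding is_brick_def orient by blast
  ultimately show ?thesis by (simp add: gg_def tc_brick)
qed

lemma ggr00: "gg r0 0 = 0"
proof -
  have "H 0 r0 {} = {(0,0,0),(1,0,0)}" by (auto simp: H_def r0_def)
  hence "card (H 0 r0 {}) = 2" by simp
  thus ?thesis unfolding gg_def by (intro tc_vol0) simp
qed

lemma ggr20: "gg r2 0 = 0"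
proof -
  have "H 0 r2 {} = {(0,2,0),(1,2,0)}" by (auto simp: H_def r2_def)
  hence "card (H 0 r2 {}) = 2" by simp
  thus ?thesis unfolding gg_def by (intro tc_vol0) simp
qed

lemma closed:
  "5 * tt (2*k) = 4 * 6^k + 1 \<and> 5 * gg Qs (2*k) + 1 = 6^(k+1) \<and> 5 * gg Qp (2*k) + 1 = 6^(k+1)
   \<and> gg r0 (2*k) = 0 \<and> gg r2 (2*k) = 0"
proof (induction k)
  case 0
  show ?case using tt0 ggQs0 ggQp0 ggr00 ggr20 by simp
next
  case (Suc k)
  have o1: "gg Qs (Suc (2*k)) = 0" using R3[of "2*k"] tt_odd Suc by simp
  have o2: "gg Qp (Suc (2*k)) = 0" using R5[of "2*k"] tt_odd Suc by simp
  have o3: "gg r0 (Suc (2*k)) = gg Qp (2*k)" using R2 .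
  have o4: "gg r2 (Suc (2*k)) = gg Qs (2*k)" using R4 .
  have e: "2 * Suc k = Suc (Suc (2*k))" by simp
  have t: "tt (2 * Suc k) = gg Qp (2*k) + 3 * tt (2*k) + gg Qs (2*k)"
    unfolding e using R1[of "2*k"] o3 by simp
  have q: "gg Qs (2 * Suc k) = tt (2 * Suc k) + 2 * gg Qs (2*k)"
    unfolding e using R3[of "Suc (2*k)"] o4 by simp
  have qp: "gg Qp (2 * Suc k) = tt (2 * Suc k) + 2 * gg Qp (2*k)"
    unfolding e using R5[of "Suc (2*k)"] o3 by simp
  have r: "gg r0 (2 * Suc k) = 0" "gg r2 (2 * Suc k) = 0"
    unfolding e using R2[of "Suc (2*k)"] R4[of "Suc (2*k)"] o1 o2 by simp_all
  have p: "(6::nat)^(Suc k + 1) = 6 * 6^(k+1)" "(6::nat)^Suc k = 6 * 6^k" "(6::nat)^(k+1) = 6 * 6^k" by simp_all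
  from Suc.IH have IH: "5 * tt (2*k) = 4 * 6^k + 1" "5 * gg Qs (2*k) + 1 = 6^(k+1)"
    "5 * gg Qp (2*k) + 1 = 6^(k+1)" by auto
  have T5: "5 * tt (2 * Suc k) = 4 * 6^Suc k + 1"
    using t IH unfolding p by linarith
  show ?case using T5 q qp r IH unfolding p by linarith
qed


lemma is_tiling_iff: "is_tiling k m n (1,2,2) P \<longleftrightarrow> P \<in> tilings (cbox3 (0,0,0) (k,m,n))"
  by (simp add: is_tiling_def tilings_def)

lemma box_H: "cbox3 (0,0,0) (2,3,n) = H n {} {}"
  by (auto simp: cbox3_def H_def)

lemma T_eq: "T (3*k) = tt (2*k)"
proof -
  have d: "2 * (3*k) div 3 = 2*k" by simp
  have "{P. is_tiling 2 3 (2 * (3*k) div 3) (1,2,2) P \<and> card P = 3*k} = tilings (H (2*k) {} {})"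
  proof -
    have "card P = 3*k" if "P \<in> tilings (H (2*k) {} {})" for P
    proof -
      have "card (H (2*k) {} {}) = 4 * card P" using tiling_volume[OF that] .
      moreover have "card (H (2*k) {} {}) = 12 * k" by (simp add: H_box card_cartesian_product)
      ultimately show ?thesis by simp
    qed
    thus ?thesis unfolding d is_tiling_iff box_H by blast
  qed
  thus ?thesis by (simp add: T_def tt_def tc_def)
qed

definition fr :: "nat \<Rightarrow> rat" where "fr k = (4 * 6^k + 1) / 5"

lemma fT: "(of_nat (T N) :: rat) = (if 3 dvd N then fr (N div 3) else 0)"
proof (cases "3 dvd N")
  case True
  then obtain k where N: "N = 3*k" by blast
  have "5 * tt (2*k) = 4 * 6^k + 1" using closed by blast
  hence "(5::rat) * of_nat (tt (2*k)) = 4 * 6^k + 1" by (metis (mono_tags) of_nat_1 of_nat_add of_nat_mult of_nat_numeral of_nat_power)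
  hence "(of_nat (tt (2*k)) :: rat) = fr k" unfolding fr_def by (simp add: field_simps)
  thus ?thesis using N T_eq by simp
next
  case False
  thus ?thesis by (simp add: T_def)
qed

lemma coeff_rel:
  fixes f :: "nat \<Rightarrow> rat"
  assumes f: "\<And>N. f N = (if 3 dvd N then fr (N div 3) else 0)"
  shows "f n - (if n < 3 then 0 else 7 * f (n-3)) + (if n < 6 then 0 else 6 * f (n-6))
       = (if n = 0 then 1 else if n = 3 then -2 else 0)"
proof (cases "3 dvd n")
  case True
  then obtain k where n: "n = 3*k" by blast
  consider "k = 0" | "k = 1" | j where "k = j + 2" by (metis One_nat_def add_2_eq_Suc' not0_implies_Suc)
  thus ?thesis
  proof cases
    case 1 thus ?thesis using n f by (simp add: fr_def)
  next
    case 2 thus ?thesis using n f by (simp add: fr_def)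
  next
    case 3
    have a: "n - 3 = 3*(j+1)" "n - 6 = 3*j" "n = 3*(j+2)" using n 3 by simp_all
    have "f n = fr (j+2)" "f (n-3) = fr (j+1)" "f (n-6) = fr j" unfolding a f by simp_all
    moreover have "n \<ge> 6" "n \<noteq> 0" "n \<noteq> 3" using a by simp_all
    ultimately show ?thesis by (simp add: fr_def field_simps)
  qed
next
  case False
  hence "\<not> 3 dvd (n-3)" if "n \<ge> 3" using that by presburger
  moreover have "\<not> 3 dvd (n-6)" if "n \<ge> 6" using False that by presburger
  moreover have "n \<noteq> 0" "n \<noteq> 3" using False by (auto, presburger)
  ultimately show ?thesis using False f by (auto simp: not_less)
qed

theorem mainTheorem15:
  shows "Abs_fps (\<lambda>N. of_nat (T N) :: rat) =
    (1 - 2 * fps_X ^ 3) / ((1 - fps_X ^ 3) * (1 - 6 * fps_X ^ 3))"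
proof -
  define F where "F = Abs_fps (\<lambda>N. of_nat (T N) :: rat)"
  define D :: "rat fps" where "D = (1 - fps_X ^ 3) * (1 - 6 * fps_X ^ 3)"
  have D0: "fps_nth D 0 = 1" by (simp add: D_def)
  have DD: "F * D = F - 7 * (F * fps_X^3) + 6 * ((F * fps_X^3) * fps_X^3)"
    unfolding D_def by (simp add: algebra_simps power_add[symmetric])
  have FD: "F * D = 1 - 2 * fps_X ^ 3"
  proof (rule fps_ext)
    fix n
    have c: "fps_nth F m = (if 3 dvd m then fr (m div 3) else 0)" for m unfolding F_def using fT by simp
    have "fps_nth (F * D) n = fps_nth F n - (if n < 3 then 0 else 7 * fps_nth F (n-3)) + (if n < 6 then 0 else 6 * fps_nth F (n-6))"
      unfolding DD by (simp add: fps_X_power_mult_right_nth diff_diff_add numeral_fps_const; arith)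
    also have "\<dots> = (if n = 0 then 1 else if n = 3 then -2 else 0)"
      by (rule coeff_rel) (rule c)
    also have "\<dots> = fps_nth (1 - 2 * fps_X ^ 3 :: rat fps) n" by (simp add: fps_X_power_nth numeral_fps_const)
    finally show "fps_nth (F * D) n = fps_nth (1 - 2 * fps_X ^ 3 :: rat fps) n" .
  qed
  have "(1 - 2 * fps_X ^ 3) / D = F * D * inverse D" using D0 FD by (simp add: fps_divide_unit)
  also have "\<dots> = F" using inverse_mult_eq_1'[of D] D0 by (simp add: mult.assoc)
  finally show ?thesis unfolding F_def D_def by simp
qed

end
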